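(* Let $f\in L^2(I)$ and let $g_0$ be the solution to $BEP_{2,\infty}$. Let $h\in L^\infty(\mathbb T)$ be non-negative with support contained in the interior $\mathring J$ of $J$, and let $$a(z)=\frac1{2\pi}\int_J\frac{e^{i\theta}+z}{e^{i\theta}-z}\,h(e^{i\theta})\,d\theta,\qquad z\in\mathbb D.$$ Then $a$ is continuous on $\overline I$ (i.e. extends continuously from $\mathbb D$ to the points of $\overline I$), and $$\mathrm{Re}\,\langle (f-g_0)\overline{g_0},\,a\rangle_I\ \ge 0 .$$
   Context: $\mathbb T$ unit circle, $\mathbb D$ unit disk, $\ell$ normalized Lebesgue measure. $I\subset\mathbb T$ measurable, $J=\mathbb T\setminus I$, $\ell(I)>0,\ell(J)>0$; interiors and closures are taken in $\mathbb T$. $\langle u,v\rangle_E=\frac1{2\pi}\int_E u\bar v\,d\theta$, $\|h\|_{L^2(E)}=\langle h,h\rangle_E^{1/2}$. $H^2$ Hardy space. Problem $BEP_{2,\infty}$: given $f\in L^2(I)$, find $g_0\in H^2$ with $|g_0|\le1$ a.e. on $J$ minimizing $\|f-g\|_{L^2(I)}$ over $g\in H^2$ with $|g|\le1$ a.e. on $J$; it has a unique solution. *)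

theory Defs
  imports "HOL-Analysis.Analysis"
begin

text \<open>The unit circle T is modelled as the sphere of radius 1 in the complex plane,
parametrised by theta in [0, 2 pi] via cis. Functions on T are functions
complex => complex evaluated at cis theta.\<close>

definition Tc :: "complex topology" where
  "Tc = top_of_set (sphere 0 1)"

definition circ_set :: "complex set \<Rightarrow> real set" where
  "circ_set E = {\<theta>\<in>{0..2*pi}. cis \<theta> \<in> E}"

definition tmeasurable :: "complex set \<Rightarrow> bool" where
  "tmeasurable E \<longleftrightarrow> circ_set E \<in> sets lebesgue"

definition ell :: "complex set \<Rightarrow> real" where
  "ell E = measure lebesgue (circ_set E) / (2*pi)"

definition L2_on :: "complex set \<Rightarrow> (complex \<Rightarrow> complex) \<Rightarrow> bool" where
  "L2_on E u \<longleftrightarrow> set_borel_measurable lebesgue (circ_set E) (\<lambda>\<theta>. u (cis \<theta>)) \<and>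
     set_integrable lebesgue (circ_set E) (\<lambda>\<theta>. (cmod (u (cis \<theta>)))^2)"

definition inner_on :: "complex set \<Rightarrow> (complex \<Rightarrow> complex) \<Rightarrow> (complex \<Rightarrow> complex) \<Rightarrow> complex" where
  "inner_on E u v = complex_of_real (1/(2*pi)) *
     (LINT \<theta>:circ_set E|lebesgue. u (cis \<theta>) * cnj (v (cis \<theta>)))"

definition norm_on :: "complex set \<Rightarrow> (complex \<Rightarrow> complex) \<Rightarrow> real" where
  "norm_on E u = sqrt (Re (inner_on E u u))"

text \<open>Hardy space H^2: L^2 functions on T whose negative-index Fourier coefficients vanish.\<close>
definition H2 :: "(complex \<Rightarrow> complex) \<Rightarrow> bool" where
  "H2 g \<longleftrightarrow> L2_on (sphere 0 1) g \<and>
     (\<forall>n::nat. n \<ge> 1 \<longrightarrow> (LINT \<theta>:{0..2*pi}|lebesgue. g (cis \<theta>) * cis (real n * \<theta>)) = 0)"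

definition bep_feasible :: "complex set \<Rightarrow> (complex \<Rightarrow> complex) \<Rightarrow> bool" where
  "bep_feasible J g \<longleftrightarrow> H2 g \<and>
     (AE \<theta> in lebesgue. \<theta> \<in> circ_set J \<longrightarrow> cmod (g (cis \<theta>)) \<le> 1)"

definition bep_solution :: "complex set \<Rightarrow> complex set \<Rightarrow> (complex \<Rightarrow> complex) \<Rightarrow> (complex \<Rightarrow> complex) \<Rightarrow> bool" where
  "bep_solution I J f g0 \<longleftrightarrow> bep_feasible J g0 \<and>
     (\<forall>g. bep_feasible J g \<longrightarrow> norm_on I (\<lambda>z. f z - g0 z) \<le> norm_on I (\<lambda>z. f z - g z))"

definition Linf_T :: "(complex \<Rightarrow> real) \<Rightarrow> bool" where
  "Linf_T h \<longleftrightarrow> set_borel_measurable lebesgue {0..2*pi} (\<lambda>\<theta>. h (cis \<theta>)) \<and>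
     (\<exists>B. AE \<theta> in lebesgue. \<theta> \<in> {0..2*pi} \<longrightarrow> \<bar>h (cis \<theta>)\<bar> \<le> B)"

definition ess_supp_in :: "(complex \<Rightarrow> real) \<Rightarrow> complex set \<Rightarrow> bool" where
  "ess_supp_in h S \<longleftrightarrow> (\<exists>K. closedin Tc K \<and> K \<subseteq> S \<and>
     (AE \<theta> in lebesgue. \<theta> \<in> {0..2*pi} \<longrightarrow> cis \<theta> \<notin> K \<longrightarrow> h (cis \<theta>) = 0))"

definition herglotz :: "complex set \<Rightarrow> (complex \<Rightarrow> real) \<Rightarrow> complex \<Rightarrow> complex" where
  "herglotz J h z = complex_of_real (1/(2*pi)) *
     (LINT \<theta>:circ_set J|lebesgue. ((cis \<theta> + z) / (cis \<theta> - z)) * complex_of_real (h (cis \<theta>)))"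

end

theory Submission
  imports Defs
begin


definition kern :: "real \<Rightarrow> complex \<Rightarrow> complex" where
  "kern \<theta> z = (cis \<theta> + z) / (cis \<theta> - z)"

definition herg :: "(real \<Rightarrow> real) \<Rightarrow> complex \<Rightarrow> complex" where
  "herg hh z = complex_of_real (1/(2*pi)) * integral\<^sup>L lebesgue (\<lambda>\<theta>. kern \<theta> z * complex_of_real (hh \<theta>))"

lemma herglotz_eq: "herglotz J h z = herg (\<lambda>\<theta>. indicator (circ_set J) \<theta> * h (cis \<theta>)) z"
  unfolding herglotz_def herg_def set_lebesgue_integral_def kern_def
  by (intro arg_cong2[where f="(*)"] refl Bochner_Integration.integral_cong) (auto split: split_indicator)

lemma cisb[measurable]: "cis \<in> borel_measurable lebesgue"
  by (rule measurable_completion) (simp add: borel_measurable_continuous_onI continuous_on_cis continuous_on_id)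

lemma kern_meas[measurable]: "(\<lambda>\<theta>. kern \<theta> z) \<in> borel_measurable lebesgue"
  unfolding kern_def using cisb by measurable

lemma kern_bound:
  assumes "cmod z \<le> 1" "0 < \<delta>" "\<delta> \<le> cmod (cis \<theta> - z)"
  shows "cmod (kern \<theta> z) \<le> 2 / \<delta>"
proof -
  have "cmod (cis \<theta> + z) \<le> 2" using norm_triangle_ineq[of "cis \<theta>" z] assms by simp
  then show ?thesis unfolding kern_def norm_divide using assms
    by (intro frac_le) auto
qed

lemma kern_ae_bound:
  assumes "0 < \<delta>" "cmod z \<le> 1"
    and ae: "AE \<theta> in lebesgue. hh \<theta> \<noteq> 0 \<longrightarrow> \<delta> \<le> cmod (cis \<theta> - z)"
  shows "AE \<theta> in lebesgue. norm (kern \<theta> z * complex_of_real (hh \<theta>)) \<le> 2/\<delta> * \<bar>hh \<theta>\<bar>"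
  using ae
proof eventually_elim
  case (elim \<theta>)
  show ?case
  proof (cases "hh \<theta> = 0")
    case False
    then have "cmod (kern \<theta> z) \<le> 2/\<delta>" using elim kern_bound assms by auto
    then have "cmod (kern \<theta> z) * \<bar>hh \<theta>\<bar> \<le> 2/\<delta> * \<bar>hh \<theta>\<bar>" by (rule mult_right_mono) simp
    then show ?thesis by (simp add: norm_mult)
  qed simp
qed

lemma herg_integrable:
  assumes hh: "integrable lebesgue hh" and "0 < \<delta>" "cmod z \<le> 1"
    and ae: "AE \<theta> in lebesgue. hh \<theta> \<noteq> 0 \<longrightarrow> \<delta> \<le> cmod (cis \<theta> - z)"
  shows "integrable lebesgue (\<lambda>\<theta>. kern \<theta> z * complex_of_real (hh \<theta>))"
proof (rule Bochner_Integration.integrable_bound)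
  show "integrable lebesgue (\<lambda>\<theta>. 2/\<delta> * \<bar>hh \<theta>\<bar>)" using hh by auto
  have [measurable]: "hh \<in> borel_measurable lebesgue" using hh by auto
  show "(\<lambda>\<theta>. kern \<theta> z * complex_of_real (hh \<theta>)) \<in> borel_measurable lebesgue" by measurable
  show "AE \<theta> in lebesgue. norm (kern \<theta> z * complex_of_real (hh \<theta>)) \<le> norm (2/\<delta> * \<bar>hh \<theta>\<bar>)"
    using kern_ae_bound[OF assms(2,3) ae] by eventually_elim (use \<open>0<\<delta>\<close> in auto)
qed

lemma herg_bound:
  assumes hh: "integrable lebesgue hh" and "0 < \<delta>" "cmod z \<le> 1"
    and ae: "AE \<theta> in lebesgue. hh \<theta> \<noteq> 0 \<longrightarrow> \<delta> \<le> cmod (cis \<theta> - z)"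
  shows "cmod (herg hh z) \<le> 1/(2*pi) * (2/\<delta> * integral\<^sup>L lebesgue (\<lambda>\<theta>. \<bar>hh \<theta>\<bar>))"
proof -
  have "norm (integral\<^sup>L lebesgue (\<lambda>\<theta>. kern \<theta> z * complex_of_real (hh \<theta>)))
        \<le> integral\<^sup>L lebesgue (\<lambda>\<theta>. norm (kern \<theta> z * complex_of_real (hh \<theta>)))"
    by (rule integral_norm_bound)
  also have "\<dots> \<le> integral\<^sup>L lebesgue (\<lambda>\<theta>. 2/\<delta> * \<bar>hh \<theta>\<bar>)"
    by (rule integral_mono_AE) (use herg_integrable[OF assms] hh kern_ae_bound[OF assms(2,3) ae] in auto)
  also have "\<dots> = 2/\<delta> * integral\<^sup>L lebesgue (\<lambda>\<theta>. \<bar>hh \<theta>\<bar>)" by simp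
  finally have X: "norm (integral\<^sup>L lebesgue (\<lambda>\<theta>. kern \<theta> z * complex_of_real (hh \<theta>)))
        \<le> 2/\<delta> * integral\<^sup>L lebesgue (\<lambda>\<theta>. \<bar>hh \<theta>\<bar>)" .
  have "cmod (herg hh z) = 1/(2*pi) * norm (integral\<^sup>L lebesgue (\<lambda>\<theta>. kern \<theta> z * complex_of_real (hh \<theta>)))"
    unfolding herg_def norm_mult norm_of_real by simp
  also have "\<dots> \<le> 1/(2*pi) * (2/\<delta> * integral\<^sup>L lebesgue (\<lambda>\<theta>. \<bar>hh \<theta>\<bar>))"
    by (rule mult_left_mono[OF X]) simp
  finally show ?thesis .
qed
lemma herg_lim:
  assumes hh: "integrable lebesgue hh" and "0 < \<delta>" "\<And>n. cmod (x n) \<le> 1"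
    and lim: "x \<longlonglongrightarrow> z"
    and ae: "\<And>n. AE \<theta> in lebesgue. hh \<theta> \<noteq> 0 \<longrightarrow> \<delta> \<le> cmod (cis \<theta> - x n)"
    and ae2: "AE \<theta> in lebesgue. hh \<theta> \<noteq> 0 \<longrightarrow> \<delta> \<le> cmod (cis \<theta> - z)"
  shows "(\<lambda>n. herg hh (x n)) \<longlonglongrightarrow> herg hh z"
proof -
  have hm[measurable]: "hh \<in> borel_measurable lebesgue" using hh by auto
  have "(\<lambda>n. integral\<^sup>L lebesgue (\<lambda>\<theta>. kern \<theta> (x n) * complex_of_real (hh \<theta>)))
     \<longlonglongrightarrow> integral\<^sup>L lebesgue (\<lambda>\<theta>. kern \<theta> z * complex_of_real (hh \<theta>))"
  proof (rule integral_dominated_convergence[where w="\<lambda>\<theta>. 2/\<delta> * \<bar>hh \<theta>\<bar>"])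
    show "integrable lebesgue (\<lambda>\<theta>. 2/\<delta> * \<bar>hh \<theta>\<bar>)" using hh by auto
    show "(\<lambda>\<theta>. kern \<theta> z * complex_of_real (hh \<theta>)) \<in> borel_measurable lebesgue" by measurable
    show "\<And>n. (\<lambda>\<theta>. kern \<theta> (x n) * complex_of_real (hh \<theta>)) \<in> borel_measurable lebesgue" by measurable
    show "AE \<theta> in lebesgue. (\<lambda>n. kern \<theta> (x n) * complex_of_real (hh \<theta>)) \<longlonglongrightarrow> kern \<theta> z * complex_of_real (hh \<theta>)"
      using ae2
    proof eventually_elim
      case (elim \<theta>)
      show ?case
      proof (cases "hh \<theta> = 0")
        case False
        then have "cis \<theta> - z \<noteq> 0" using elim \<open>0 < \<delta>\<close> by auto
        then show ?thesis unfolding kern_def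
          by (intro tendsto_intros lim) auto
      qed simp
    qed
    fix n
    have "cmod (x n) \<le> 1" by fact
    show "AE \<theta> in lebesgue. norm (kern \<theta> (x n) * complex_of_real (hh \<theta>)) \<le> 2/\<delta> * \<bar>hh \<theta>\<bar>"
      by (rule kern_ae_bound[OF \<open>0<\<delta>\<close> \<open>cmod (x n) \<le> 1\<close> ae])
  qed
  then show ?thesis unfolding herg_def by (intro tendsto_intros)
qed

lemma herg_lim_ev:
  assumes hh: "integrable lebesgue hh" and "0 < \<delta>" "\<And>n. cmod (x n) \<le> 1"
    and lim: "x \<longlonglongrightarrow> z"
    and ae: "\<And>n. n \<ge> N \<Longrightarrow> AE \<theta> in lebesgue. hh \<theta> \<noteq> 0 \<longrightarrow> \<delta> \<le> cmod (cis \<theta> - x n)"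
    and ae2: "AE \<theta> in lebesgue. hh \<theta> \<noteq> 0 \<longrightarrow> \<delta> \<le> cmod (cis \<theta> - z)"
  shows "(\<lambda>n. herg hh (x n)) \<longlonglongrightarrow> herg hh z"
proof (rule LIMSEQ_offset[where k=N])
  show "(\<lambda>n. herg hh (x (n + N))) \<longlonglongrightarrow> herg hh z"
    by (rule herg_lim[OF hh \<open>0<\<delta>\<close> assms(3) LIMSEQ_ignore_initial_segment[OF lim] ae ae2]) auto
qed

lemma herg_cont:
  assumes hh: "integrable lebesgue hh" and K: "compact K" and C: "closed C" "K \<inter> C = {}" "C \<subseteq> cball 0 1"
    and ae: "AE \<theta> in lebesgue. hh \<theta> \<noteq> 0 \<longrightarrow> cis \<theta> \<in> K"
  shows "continuous_on (ball 0 1 \<union> C) (herg hh)"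
proof (rule continuous_on_sequentiallyI)
  fix x and a
  assume xs: "\<forall>n. x n \<in> ball 0 1 \<union> C" and a: "a \<in> ball 0 1 \<union> C" and lim: "x \<longlonglongrightarrow> a"
  have xn: "cmod (x n) \<le> 1" for n using xs C(3) by (metis less_imp_le subset_iff mem_cball_0 Un_iff mem_ball_0)
  show "(\<lambda>n. herg hh (x n)) \<longlonglongrightarrow> herg hh a"
  proof (cases "a \<in> ball 0 1")
    case True
    define \<delta> where "\<delta> = (1 - cmod a) / 2"
    have d: "0 < \<delta>" using True by (simp add: \<delta>_def)
    obtain N where N: "\<And>n. n \<ge> N \<Longrightarrow> dist (x n) a < \<delta>" using metric_LIMSEQ_D[OF lim d] by blast
    show "(\<lambda>n. herg hh (x n)) \<longlonglongrightarrow> herg hh a"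
    proof (rule herg_lim_ev[OF hh d xn lim])
      fix n assume "n \<ge> N"
      then have "dist (x n) a < \<delta>" by (rule N)
      then have "cmod (x n) < 1 - \<delta>" unfolding \<delta>_def dist_norm
        using norm_triangle_ineq2[of "x n" a] by (simp add: field_simps)
      then have "\<delta> \<le> cmod (cis \<theta> - x n)" for \<theta>
        using norm_triangle_ineq2[of "cis \<theta>" "x n"] by simp
      then show "AE \<theta> in lebesgue. hh \<theta> \<noteq> 0 \<longrightarrow> \<delta> \<le> cmod (cis \<theta> - x n)" by simp
    next
      have "\<delta> \<le> cmod (cis \<theta> - a)" for \<theta>
        using norm_triangle_ineq2[of "cis \<theta>" "a"] True by (simp add: \<delta>_def)
      then show "AE \<theta> in lebesgue. hh \<theta> \<noteq> 0 \<longrightarrow> \<delta> \<le> cmod (cis \<theta> - a)" by simp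
    qed
  next
    case False
    then have aC: "a \<in> C" using a by auto
    obtain d where d: "d > 0" and dd: "\<And>k y. k \<in> K \<Longrightarrow> y \<in> C \<Longrightarrow> d \<le> dist k y"
      using separate_compact_closed[OF K C(1,2)] by blast
    have d2: "0 < d/2" using d by simp
    obtain N where N: "\<And>n. n \<ge> N \<Longrightarrow> dist (x n) a < d/2" using metric_LIMSEQ_D[OF lim d2] by blast
    show "(\<lambda>n. herg hh (x n)) \<longlonglongrightarrow> herg hh a"
    proof (rule herg_lim_ev[OF hh d2 xn lim])
      fix n assume "n \<ge> N"
      then have xa: "dist (x n) a < d/2" by (rule N)
      have KK: "d/2 \<le> cmod (cis \<theta> - x n)" if "cis \<theta> \<in> K" for \<theta>
      proof -
        have "d \<le> dist (cis \<theta>) a" using dd[OF that aC] .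
        also have "\<dots> \<le> dist (cis \<theta>) (x n) + dist (x n) a" by (rule dist_triangle)
        finally show ?thesis using xa by (simp add: dist_norm)
      qed
      show "AE \<theta> in lebesgue. hh \<theta> \<noteq> 0 \<longrightarrow> d/2 \<le> cmod (cis \<theta> - x n)"
        using ae by eventually_elim (use KK in auto)
    next
      have KK: "d/2 \<le> cmod (cis \<theta> - a)" if "cis \<theta> \<in> K" for \<theta>
        using dd[OF that aC] d by (simp add: dist_norm)
      show "AE \<theta> in lebesgue. hh \<theta> \<noteq> 0 \<longrightarrow> d/2 \<le> cmod (cis \<theta> - a)"
        using ae by eventually_elim (use KK in auto)
    qed
  qed
qed



definition beta :: "(real \<Rightarrow> real) \<Rightarrow> nat \<Rightarrow> complex" where
  "beta hh k = integral\<^sup>L lebesgue (\<lambda>\<theta>. cnj (cis \<theta>) ^ k * complex_of_real (hh \<theta>))"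

lemma cnjcisb[measurable]: "(\<lambda>\<theta>. cnj (cis \<theta>)) \<in> borel_measurable lebesgue"
  by (rule measurable_completion) (simp add: borel_measurable_continuous_onI continuous_on_cis continuous_on_id continuous_on_cnj)

lemma ofrealb[measurable]: "hh \<in> borel_measurable lebesgue \<Longrightarrow> (\<lambda>\<theta>. complex_of_real (hh \<theta>)) \<in> borel_measurable lebesgue"
  by measurable

lemma kern_series:
  assumes "cmod w < 1"
  shows "kern \<theta> w = -1 + 2 * (\<Sum>k. (w * cnj (cis \<theta>)) ^ k)"
proof -
  let ?q = "w * cnj (cis \<theta>)"
  have q: "norm ?q < 1" using assms by (simp add: norm_mult)
  have s: "(\<Sum>k. ?q ^ k) = 1 / (1 - ?q)" using suminf_geometric[OF q] .
  have q1: "1 - ?q \<noteq> 0" using q by auto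
  have cc: "cis \<theta> * cnj (cis \<theta>) = 1" by (simp add: cis_cnj cis_mult)
  have "cis \<theta> - w = cis \<theta> * (1 - ?q)" using cc by (simp add: algebra_simps)
  moreover have "cis \<theta> + w = cis \<theta> * (1 + ?q)" using cc by (simp add: algebra_simps)
  ultimately have "kern \<theta> w = (1 + ?q) / (1 - ?q)" unfolding kern_def by simp
  also have "\<dots> = -1 + 2 * (1 / (1 - ?q))" using q1 by (simp add: field_simps)
  finally show ?thesis using s by simp
qed

lemma beta_bound: "integrable lebesgue hh \<Longrightarrow> cmod (beta hh k) \<le> integral\<^sup>L lebesgue (\<lambda>\<theta>. \<bar>hh \<theta>\<bar>)"
  unfolding beta_def
  by (rule order.trans[OF integral_norm_bound]) (simp add: norm_mult norm_power)

lemma herg_series: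
  assumes hh: "integrable lebesgue hh" and w: "cmod w < 1"
  shows "herg hh w = complex_of_real (1/(2*pi)) *
     (- complex_of_real (integral\<^sup>L lebesgue hh) + 2 * (\<Sum>k. w ^ k * beta hh k))"
    and "summable (\<lambda>k. w ^ k * beta hh k)"
proof -
  have [measurable]: "hh \<in> borel_measurable lebesgue" using hh by auto
  define f where "f k \<theta> = (w * cnj (cis \<theta>)) ^ k * complex_of_real (hh \<theta>)" for k \<theta>
  have nf: "norm (f k \<theta>) = cmod w ^ k * \<bar>hh \<theta>\<bar>" for k \<theta>
    by (simp add: f_def norm_mult norm_power)
  have fi: "integrable lebesgue (f k)" for k
  proof (rule Bochner_Integration.integrable_bound[where f="\<lambda>\<theta>. \<bar>hh \<theta>\<bar>"])
    show "integrable lebesgue (\<lambda>\<theta>. \<bar>hh \<theta>\<bar>)" using hh by auto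
    show "f k \<in> borel_measurable lebesgue" unfolding f_def by measurable
    show "AE \<theta> in lebesgue. norm (f k \<theta>) \<le> norm \<bar>hh \<theta>\<bar>"
      unfolding nf using w by (auto intro!: mult_left_le_one_le power_le_one)
  qed
  have s1: "AE \<theta> in lebesgue. summable (\<lambda>k. norm (f k \<theta>))"
    unfolding nf using w by (auto intro!: summable_mult2 summable_geometric)
  have s2: "summable (\<lambda>k. integral\<^sup>L lebesgue (\<lambda>\<theta>. norm (f k \<theta>)))"
    unfolding nf using w by (auto intro!: summable_mult2 summable_geometric)
  have ik: "integral\<^sup>L lebesgue (f k) = w ^ k * beta hh k" for k
    unfolding f_def beta_def power_mult_distrib
    by (simp add: mult.assoc)
  have isum: "integrable lebesgue (\<lambda>\<theta>. \<Sum>k. f k \<theta>)" by (rule integrable_suminf[OF fi s1 s2])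
  have esum: "integral\<^sup>L lebesgue (\<lambda>\<theta>. \<Sum>k. f k \<theta>) = (\<Sum>k. w ^ k * beta hh k)"
    using integral_suminf[OF fi s1 s2] ik by simp
  show "summable (\<lambda>k. w ^ k * beta hh k)" using summable_integral[OF fi s1 s2] ik by simp
  have pt: "kern \<theta> w * complex_of_real (hh \<theta>) = - complex_of_real (hh \<theta>) + 2 * (\<Sum>k. f k \<theta>)" for \<theta>
  proof -
    have sq: "summable (\<lambda>k. (w * cnj (cis \<theta>)) ^ k)" using w by (intro summable_geometric) (simp add: norm_mult)
    have "(\<Sum>k. f k \<theta>) = (\<Sum>k. (w * cnj (cis \<theta>)) ^ k) * complex_of_real (hh \<theta>)"
      unfolding f_def by (rule suminf_mult2[OF sq, symmetric])
    moreover have "\<And>S x::complex. (-1 + 2*S)*x = -x + 2*(S*x)" by (simp add: algebra_simps)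
    ultimately show ?thesis unfolding kern_series[OF w] by metis
  qed
  have "integral\<^sup>L lebesgue (\<lambda>\<theta>. kern \<theta> w * complex_of_real (hh \<theta>)) =
        integral\<^sup>L lebesgue (\<lambda>\<theta>. - complex_of_real (hh \<theta>) + 2 * (\<Sum>k. f k \<theta>))"
    unfolding pt ..
  also have "\<dots> = - complex_of_real (integral\<^sup>L lebesgue hh) + 2 * (\<Sum>k. w ^ k * beta hh k)"
    using hh isum by (simp add: esum)
  finally show "herg hh w = complex_of_real (1/(2*pi)) *
     (- complex_of_real (integral\<^sup>L lebesgue hh) + 2 * (\<Sum>k. w ^ k * beta hh k))"
    unfolding herg_def by simp
qed



lemma cis_kb[measurable]: "(\<lambda>\<phi>. cis (c * \<phi>)) \<in> borel_measurable lebesgue"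
  by (rule measurable_completion) (simp add: borel_measurable_continuous_onI continuous_on_cis continuous_on_id continuous_on_mult)

lemma ser_meas:
  assumes sg: "summable (\<lambda>k. cmod (\<gamma> k))"
  shows "(\<lambda>\<phi>. A + (\<Sum>k. \<gamma> k * cis (real k * \<phi>))) \<in> borel_measurable lebesgue"
proof -
  have sm: "summable (\<lambda>k. \<gamma> k * cis (real k * \<phi>))" for \<phi>
    by (rule summable_norm_cancel) (simp add: norm_mult sg)
  show ?thesis
  proof (rule borel_measurable_LIMSEQ_metric[where f="\<lambda>n \<phi>. A + (\<Sum>k<n. \<gamma> k * cis (real k * \<phi>))"])
    show "\<And>i. (\<lambda>\<phi>. A + (\<Sum>k<i. \<gamma> k * cis (real k * \<phi>))) \<in> borel_measurable lebesgue"
      by measurable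
    show "\<And>\<phi>. \<phi> \<in> space lebesgue \<Longrightarrow> (\<lambda>i. A + (\<Sum>k<i. \<gamma> k * cis (real k * \<phi>))) \<longlonglongrightarrow> A + (\<Sum>k. \<gamma> k * cis (real k * \<phi>))"
      by (intro tendsto_intros summable_LIMSEQ sm)
  qed
qed

lemma ser_bound:
  assumes sg: "summable (\<lambda>k. cmod (\<gamma> k))"
  shows "cmod (A + (\<Sum>k. \<gamma> k * cis (real k * \<phi>))) \<le> cmod A + (\<Sum>k. cmod (\<gamma> k))"
proof -
  have "cmod (\<Sum>k. \<gamma> k * cis (real k * \<phi>)) \<le> (\<Sum>k. cmod (\<gamma> k))"
    by (rule norm_suminf_le[OF _ sg]) (simp add: norm_mult)
  then show ?thesis using norm_triangle_ineq[of A "\<Sum>k. \<gamma> k * cis (real k * \<phi>)"] by linarith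
qed

lemma circ_set_sphere: "circ_set (sphere 0 1) = {0..2*pi}"
  unfolding circ_set_def by auto

lemma le_1_sq: "(x::real) \<le> 1 + x^2"
proof -
  have "0 \<le> (x - 1/2)^2" by simp
  then show ?thesis by (simp add: power2_eq_square algebra_simps)
qed

lemma L2_L1:
  assumes "L2_on E u"
  shows "integrable lebesgue (\<lambda>\<theta>. indicator (circ_set E) \<theta> *\<^sub>R u (cis \<theta>))"
proof (rule Bochner_Integration.integrable_bound[where f="\<lambda>\<theta>. indicator {0..2*pi} \<theta> *\<^sub>R (1::real) +
      indicator (circ_set E) \<theta> *\<^sub>R (cmod (u (cis \<theta>)))^2"])
  have m: "set_borel_measurable lebesgue (circ_set E) (\<lambda>\<theta>. u (cis \<theta>))"
    and i: "set_integrable lebesgue (circ_set E) (\<lambda>\<theta>. (cmod (u (cis \<theta>)))^2)"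
    using assms unfolding L2_on_def by auto
  show "(\<lambda>\<theta>. indicator (circ_set E) \<theta> *\<^sub>R u (cis \<theta>)) \<in> borel_measurable lebesgue"
    using m unfolding set_borel_measurable_def .
  have i2: "integrable lebesgue (\<lambda>\<theta>. indicator {0..2*pi} \<theta> *\<^sub>R (1::real))"
    using integrable_real_indicator[of "{0..2*pi}" lebesgue] by simp
  show "integrable lebesgue (\<lambda>\<theta>. indicator {0..2*pi} \<theta> *\<^sub>R (1::real) +
      indicator (circ_set E) \<theta> *\<^sub>R (cmod (u (cis \<theta>)))^2)"
    using i i2 unfolding set_integrable_def by auto
  have sub: "circ_set E \<subseteq> {0..2*pi}" unfolding circ_set_def by auto
  show "AE \<theta> in lebesgue. norm (indicator (circ_set E) \<theta> *\<^sub>R u (cis \<theta>)) \<le>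
      norm (indicator {0..2*pi} \<theta> *\<^sub>R (1::real) + indicator (circ_set E) \<theta> *\<^sub>R (cmod (u (cis \<theta>)))^2)"
  proof (rule AE_I2)
    fix \<theta>
    have "cmod (u (cis \<theta>)) \<le> 1 + (cmod (u (cis \<theta>)))^2"
      by (rule le_1_sq)
    then show "norm (indicator (circ_set E) \<theta> *\<^sub>R u (cis \<theta>)) \<le>
      norm (indicator {0..2*pi} \<theta> *\<^sub>R (1::real) + indicator (circ_set E) \<theta> *\<^sub>R (cmod (u (cis \<theta>)))^2)"
      using sub by (auto split: split_indicator)
  qed
qed

lemma integrable_mult_cis:
  assumes "integrable lebesgue G"
  shows "integrable lebesgue (\<lambda>\<theta>. G \<theta> * cis (c * \<theta>))"
proof (rule Bochner_Integration.integrable_bound[where f="\<lambda>\<theta>. norm (G \<theta>)"])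
  show "integrable lebesgue (\<lambda>\<theta>. norm (G \<theta>))" using assms by auto
  have [measurable]: "G \<in> borel_measurable lebesgue" using assms by auto
  show "(\<lambda>\<theta>. G \<theta> * cis (c * \<theta>)) \<in> borel_measurable lebesgue" by measurable
  show "AE \<theta> in lebesgue. norm (G \<theta> * cis (c * \<theta>)) \<le> norm (norm (G \<theta>))"
    by (simp add: norm_mult)
qed

lemma H2_mult:
  assumes H: "H2 g" and sg: "summable (\<lambda>k. cmod (\<gamma> k))"
    and Meq: "\<And>\<phi>. M (cis \<phi>) = A + (\<Sum>k. \<gamma> k * cis (real k * \<phi>))"
  shows "H2 (\<lambda>z. g z * M z)"
proof -
  define m where "m \<phi> = A + (\<Sum>k. \<gamma> k * cis (real k * \<phi>))" for \<phi>
  define Bd where "Bd = cmod A + (\<Sum>k. cmod (\<gamma> k))"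
  have Mm: "M (cis \<phi>) = m \<phi>" for \<phi> using Meq m_def by simp
  have mmeas[measurable]: "m \<in> borel_measurable lebesgue" unfolding m_def by (rule ser_meas[OF sg])
  have mb: "cmod (m \<phi>) \<le> Bd" for \<phi> unfolding m_def Bd_def by (rule ser_bound[OF sg])
  have L2: "L2_on (sphere 0 1) g" and F: "\<And>n::nat. n \<ge> 1 \<Longrightarrow> (LINT \<theta>:{0..2*pi}|lebesgue. g (cis \<theta>) * cis (real n * \<theta>)) = 0"
    using H unfolding H2_def by auto
  define G where "G \<theta> = indicator {0..2*pi} \<theta> *\<^sub>R g (cis \<theta>)" for \<theta>
  have Gi: "integrable lebesgue G" using L2_L1[OF L2] unfolding G_def circ_set_sphere .
  have Gm[measurable]: "G \<in> borel_measurable lebesgue" using Gi by auto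
  have gm: "(\<lambda>\<theta>. indicator {0..2*pi} \<theta> *\<^sub>R g (cis \<theta>)) \<in> borel_measurable lebesgue"
    using Gm unfolding G_def .
  have g2: "integrable lebesgue (\<lambda>\<theta>. indicator {0..2*pi} \<theta> *\<^sub>R (cmod (g (cis \<theta>)))^2)"
    using L2 unfolding L2_on_def circ_set_sphere set_integrable_def by auto
  have FG: "integral\<^sup>L lebesgue (\<lambda>\<theta>. G \<theta> * cis (real j * \<theta>)) = 0" if "j \<ge> 1" for j :: nat
  proof -
    have "integral\<^sup>L lebesgue (\<lambda>\<theta>. G \<theta> * cis (real j * \<theta>)) = (LINT \<theta>:{0..2*pi}|lebesgue. g (cis \<theta>) * cis (real j * \<theta>))"
      unfolding set_lebesgue_integral_def G_def
      by (intro Bochner_Integration.integral_cong) (auto split: split_indicator)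
    then show ?thesis using F[OF that] by simp
  qed
  have "L2_on (sphere 0 1) (\<lambda>z. g z * M z)"
    unfolding L2_on_def circ_set_sphere set_borel_measurable_def set_integrable_def
  proof
    have eq1: "(\<lambda>\<theta>. indicator {0..2*pi} \<theta> *\<^sub>R (g (cis \<theta>) * M (cis \<theta>))) = (\<lambda>\<theta>. G \<theta> * m \<theta>)"
      unfolding G_def Mm by (auto split: split_indicator)
    show "(\<lambda>\<theta>. indicator {0..2*pi} \<theta> *\<^sub>R (g (cis \<theta>) * M (cis \<theta>))) \<in> borel_measurable lebesgue"
      unfolding eq1 by measurable
    show "integrable lebesgue (\<lambda>\<theta>. indicator {0..2*pi} \<theta> *\<^sub>R (cmod (g (cis \<theta>) * M (cis \<theta>)))^2)"
    proof (rule Bochner_Integration.integrable_bound[where f="\<lambda>\<theta>. Bd^2 * (indicator {0..2*pi} \<theta> *\<^sub>R (cmod (g (cis \<theta>)))^2)"])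
      show "integrable lebesgue (\<lambda>\<theta>. Bd^2 * (indicator {0..2*pi} \<theta> *\<^sub>R (cmod (g (cis \<theta>)))^2))"
        using g2 by auto
      have eq2: "(\<lambda>\<theta>. indicator {0..2*pi} \<theta> *\<^sub>R (cmod (g (cis \<theta>) * M (cis \<theta>)))^2) = (\<lambda>\<theta>. (cmod (G \<theta> * m \<theta>))^2)"
        unfolding G_def Mm by (auto split: split_indicator simp: norm_mult)
      show "(\<lambda>\<theta>. indicator {0..2*pi} \<theta> *\<^sub>R (cmod (g (cis \<theta>) * M (cis \<theta>)))^2) \<in> borel_measurable lebesgue"
        unfolding eq2 by measurable
      show "AE \<theta> in lebesgue. norm (indicator {0..2*pi} \<theta> *\<^sub>R (cmod (g (cis \<theta>) * M (cis \<theta>)))^2)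
          \<le> norm (Bd^2 * (indicator {0..2*pi} \<theta> *\<^sub>R (cmod (g (cis \<theta>)))^2))"
      proof (rule AE_I2)
        fix \<theta>
        have "(cmod (g (cis \<theta>) * M (cis \<theta>)))^2 \<le> Bd^2 * (cmod (g (cis \<theta>)))^2"
          unfolding Mm norm_mult power_mult_distrib
          by (simp add: mult.commute mult_right_mono power_mono mb)
        then show "norm (indicator {0..2*pi} \<theta> *\<^sub>R (cmod (g (cis \<theta>) * M (cis \<theta>)))^2)
          \<le> norm (Bd^2 * (indicator {0..2*pi} \<theta> *\<^sub>R (cmod (g (cis \<theta>)))^2))"
          by (auto split: split_indicator)
      qed
    qed
  qed
  moreover have "(LINT \<theta>:{0..2*pi}|lebesgue. g (cis \<theta>) * M (cis \<theta>) * cis (real n * \<theta>)) = 0"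
    if n: "n \<ge> 1" for n :: nat
  proof -
    define f where "f k \<theta> = \<gamma> k * (G \<theta> * cis (real (k + n) * \<theta>))" for k \<theta>
    have sm: "summable (\<lambda>k. \<gamma> k * cis (real k * \<phi>))" for \<phi>
      by (rule summable_norm_cancel) (simp add: norm_mult sg)
    have pt: "G \<theta> * m \<theta> * cis (real n * \<theta>) = A * (G \<theta> * cis (real n * \<theta>)) + (\<Sum>k. f k \<theta>)" for \<theta>
    proof -
      have "(\<Sum>k. f k \<theta>) = (\<Sum>k. \<gamma> k * cis (real k * \<theta>)) * (G \<theta> * cis (real n * \<theta>))"
        unfolding f_def
        by (subst suminf_mult2[OF sm]) (simp add: cis_mult algebra_simps)
      then show ?thesis unfolding m_def by (simp add: algebra_simps)
    qed
    have fi: "integrable lebesgue (f k)" for k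
      unfolding f_def by (intro integrable_mult_right integrable_mult_cis Gi)
    have nf: "norm (f k \<theta>) = cmod (\<gamma> k) * norm (G \<theta>)" for k \<theta>
      by (simp add: f_def norm_mult)
    have s1: "AE \<theta> in lebesgue. summable (\<lambda>k. norm (f k \<theta>))"
      unfolding nf using sg by (auto intro!: summable_mult2)
    have s2: "summable (\<lambda>k. integral\<^sup>L lebesgue (\<lambda>\<theta>. norm (f k \<theta>)))"
      unfolding nf using sg by (auto intro!: summable_mult2)
    have fk0: "integral\<^sup>L lebesgue (f k) = 0" for k
      unfolding f_def using FG[of "k+n"] n by simp
    have "(LINT \<theta>:{0..2*pi}|lebesgue. g (cis \<theta>) * M (cis \<theta>) * cis (real n * \<theta>))
        = integral\<^sup>L lebesgue (\<lambda>\<theta>. G \<theta> * m \<theta> * cis (real n * \<theta>))"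
      unfolding set_lebesgue_integral_def G_def Mm
      by (intro Bochner_Integration.integral_cong) (auto split: split_indicator)
    also have "\<dots> = integral\<^sup>L lebesgue (\<lambda>\<theta>. A * (G \<theta> * cis (real n * \<theta>)) + (\<Sum>k. f k \<theta>))"
      unfolding pt ..
    also have "\<dots> = A * integral\<^sup>L lebesgue (\<lambda>\<theta>. G \<theta> * cis (real n * \<theta>)) + integral\<^sup>L lebesgue (\<lambda>\<theta>. \<Sum>k. f k \<theta>)"
      using integrable_suminf[OF fi s1 s2] integrable_mult_cis[OF Gi] by simp
    also have "\<dots> = 0"
      using integral_suminf[OF fi s1 s2] fk0 FG[OF n] by simp
    finally show ?thesis .
  qed
  ultimately show ?thesis unfolding H2_def by auto
qed



lemma cnj_meas[measurable]: "f \<in> borel_measurable M \<Longrightarrow> (\<lambda>x. cnj (f x)) \<in> borel_measurable M"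
  by (rule measurable_compose[where f=f and g=cnj]) (auto intro: borel_measurable_continuous_onI continuous_on_cnj continuous_on_id)

lemma int_prod:
  fixes U V :: "real \<Rightarrow> complex"
  assumes [measurable]: "U \<in> borel_measurable lebesgue" "V \<in> borel_measurable lebesgue"
    and iU: "integrable lebesgue (\<lambda>x. (cmod (U x))^2)" and iV: "integrable lebesgue (\<lambda>x. (cmod (V x))^2)"
  shows "integrable lebesgue (\<lambda>x. U x * cnj (V x))"
proof (rule Bochner_Integration.integrable_bound[where f="\<lambda>x. (cmod (U x))^2 + (cmod (V x))^2"])
  show "integrable lebesgue (\<lambda>x. (cmod (U x))^2 + (cmod (V x))^2)" using iU iV by auto
  show "(\<lambda>x. U x * cnj (V x)) \<in> borel_measurable lebesgue" by measurable
  show "AE x in lebesgue. norm (U x * cnj (V x)) \<le> norm ((cmod (U x))^2 + (cmod (V x))^2)"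
  proof (rule AE_I2)
    fix x
    have A: "2 * cmod (U x) * cmod (V x) \<le> (cmod (U x))^2 + (cmod (V x))^2"
      by (rule sum_squares_bound)
    have B: "0 \<le> cmod (U x) * cmod (V x)" by simp
    have "cmod (U x) * cmod (V x) \<le> (cmod (U x))^2 + (cmod (V x))^2"
      using A B by linarith
    then show "norm (U x * cnj (V x)) \<le> norm ((cmod (U x))^2 + (cmod (V x))^2)"
      by (simp add: norm_mult)
  qed
qed

lemma quad_lemma:
  fixes U V :: "real \<Rightarrow> complex"
  assumes [measurable]: "U \<in> borel_measurable lebesgue" "V \<in> borel_measurable lebesgue"
    and iU: "integrable lebesgue (\<lambda>x. (cmod (U x))^2)" and iV: "integrable lebesgue (\<lambda>x. (cmod (V x))^2)"
    and t0: "t0 > 0"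
    and ineq: "\<And>t. 0 < t \<Longrightarrow> t \<le> t0 \<Longrightarrow>
       integral\<^sup>L lebesgue (\<lambda>x. (cmod (U x))^2) \<le> integral\<^sup>L lebesgue (\<lambda>x. (cmod (U x + complex_of_real t * V x))^2)"
  shows "0 \<le> Re (integral\<^sup>L lebesgue (\<lambda>x. U x * cnj (V x)))"
proof -
  have iUV: "integrable lebesgue (\<lambda>x. U x * cnj (V x))" by (rule int_prod) (use iU iV in auto)
  define R where "R x = Re (U x * cnj (V x))" for x
  have iR: "integrable lebesgue R" unfolding R_def by (rule integrable_Re[OF iUV])
  define X where "X = Re (integral\<^sup>L lebesgue (\<lambda>x. U x * cnj (V x)))"
  have XR: "X = integral\<^sup>L lebesgue R" unfolding X_def R_def using integral_Re[OF iUV] by simp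
  define Y where "Y = integral\<^sup>L lebesgue (\<lambda>x. (cmod (V x))^2)"
  have Y0: "Y \<ge> 0" unfolding Y_def by simp
  have pt: "(cmod (U x + complex_of_real t * V x))^2 = (cmod (U x))^2 + 2 * t * R x + t^2 * (cmod (V x))^2" for x t
    unfolding cmod_power2 R_def by (simp add: power2_eq_square algebra_simps)
  have key: "0 \<le> 2 * t * X + t^2 * Y" if "0 < t" "t \<le> t0" for t
  proof -
    have "integral\<^sup>L lebesgue (\<lambda>x. (cmod (U x + complex_of_real t * V x))^2)
       = integral\<^sup>L lebesgue (\<lambda>x. (cmod (U x))^2) + 2 * t * X + t^2 * Y"
      unfolding pt XR Y_def using iU iV iR by simp
    then show ?thesis using ineq[OF that] by simp
  qed
  show ?thesis
  proof (rule ccontr)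
    assume "\<not> 0 \<le> Re (integral\<^sup>L lebesgue (\<lambda>x. U x * cnj (V x)))"
    then have Xn: "X < 0" unfolding X_def by simp
    define t where "t = min t0 (- X / (Y + 1))"
    have tp: "0 < t" using t0 Xn Y0 by (simp add: t_def divide_neg_pos)
    have tl: "t \<le> t0" by (simp add: t_def)
    have "t * Y \<le> (- X / (Y + 1)) * Y" using Y0 by (intro mult_right_mono) (auto simp: t_def)
    also have "\<dots> \<le> - X" using Xn Y0 by (simp add: field_simps)
    finally have "t * Y \<le> - X" .
    then have "2 * X + t * Y < 0" using Xn by linarith
    then have "t * (2 * X + t * Y) < 0" using tp by (simp add: mult_pos_neg)
    moreover have "t * (2 * X + t * Y) = 2 * t * X + t^2 * Y" by (simp add: power2_eq_square algebra_simps)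
    ultimately show False using key[OF tp tl] by linarith
  qed
qed

lemma div_cnj: "b \<noteq> 0 \<Longrightarrow> (a::complex) / b = a * cnj b / complex_of_real ((cmod b)^2)"
proof -
  assume b: "b \<noteq> 0"
  then have "cnj b \<noteq> 0" by simp
  then have "a * cnj b / (b * cnj b) = a / b" by simp
  then show ?thesis unfolding complex_norm_square by simp
qed

lemma Re_kern_nonneg:
  assumes "cmod w < 1"
  shows "0 \<le> Re (kern \<theta> w)"
proof -
  let ?c = "cis \<theta>"
  have "Re ((?c + w) * cnj (?c - w)) = ((cos \<theta>)^2 + (sin \<theta>)^2) - ((Re w)^2 + (Im w)^2)"
    by (simp add: power2_eq_square algebra_simps)
  also have "\<dots> = 1 - (cmod w)^2" by (simp add: cmod_power2)
  finally have "Re ((?c + w) * cnj (?c - w)) = 1 - (cmod w)^2" .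
  moreover have "kern \<theta> w = (?c + w) * cnj (?c - w) / complex_of_real ((cmod (?c - w))^2)"
  proof (cases "?c - w = 0")
    case True then show ?thesis by (simp add: kern_def)
  next
    case False
    then show ?thesis unfolding kern_def by (rule div_cnj)
  qed
  ultimately have "Re (kern \<theta> w) = (1 - (cmod w)^2) / (cmod (?c - w))^2"
    by (simp add: Re_divide_of_real)
  moreover have "0 \<le> 1 - (cmod w)^2" using assms by (simp add: abs_square_le_1 power_le_one)
  ultimately show ?thesis by simp
qed

lemma herg_Re_nonneg:
  assumes hh: "integrable lebesgue hh" and pos: "AE \<theta> in lebesgue. 0 \<le> hh \<theta>" and w: "cmod w < 1"
  shows "0 \<le> Re (herg hh w)"
proof -
  have d: "0 < 1 - cmod w" using w by simp
  have ae: "AE \<theta> in lebesgue. hh \<theta> \<noteq> 0 \<longrightarrow> 1 - cmod w \<le> cmod (cis \<theta> - w)"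
    using norm_triangle_ineq2[of "cis _" w] by simp
  have i: "integrable lebesgue (\<lambda>\<theta>. kern \<theta> w * complex_of_real (hh \<theta>))"
    by (rule herg_integrable[OF hh d _ ae]) (use w in simp)
  have "0 \<le> integral\<^sup>L lebesgue (\<lambda>\<theta>. Re (kern \<theta> w * complex_of_real (hh \<theta>)))"
    using pos by (intro integral_nonneg_AE) (auto elim!: eventually_mono intro: mult_nonneg_nonneg Re_kern_nonneg[OF w])
  moreover have "Re (integral\<^sup>L lebesgue (\<lambda>\<theta>. kern \<theta> w * complex_of_real (hh \<theta>))) =
     integral\<^sup>L lebesgue (\<lambda>\<theta>. Re (kern \<theta> w * complex_of_real (hh \<theta>)))"
    by (rule integral_Re[OF i, symmetric])
  ultimately show ?thesis unfolding herg_def by simp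
qed

lemma geo_lemma:
  assumes "cmod u = 1" "cmod v = 1" "0 \<le> r" "r \<le> 1"
  shows "cmod (u - v) \<le> 2 * cmod (u - complex_of_real r * v)"
proof -
  have "cmod (u - v) \<le> cmod (u - complex_of_real r * v) + cmod (complex_of_real r * v - v)"
    using norm_triangle_ineq[of "u - complex_of_real r * v" "complex_of_real r * v - v"] by simp
  moreover have "cmod (complex_of_real r * v - v) = 1 - r"
  proof -
    have "cmod (complex_of_real r * v - v) = cmod (complex_of_real (r - 1) * v)" by (simp add: algebra_simps)
    also have "\<dots> = \<bar>r - 1\<bar>" unfolding norm_mult norm_of_real using assms by simp
    finally show ?thesis using assms by simp
  qed
  moreover have "1 - r \<le> cmod (u - complex_of_real r * v)"
    using norm_triangle_ineq2[of u "complex_of_real r * v"] assms by (simp add: norm_mult)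
  ultimately show ?thesis by linarith
qed

lemma re_inner_self: "Re (inner_on E F F) = 1/(2*pi) * (LINT \<theta>:circ_set E|lebesgue. (cmod (F (cis \<theta>)))^2)"
proof -
  have "inner_on E F F = complex_of_real (1/(2*pi)) * (LINT \<theta>:circ_set E|lebesgue. complex_of_real ((cmod (F (cis \<theta>)))^2))"
    unfolding inner_on_def complex_norm_square ..
  then show ?thesis unfolding set_integral_complex_of_real by simp
qed



definition L2ok :: "(real \<Rightarrow> complex) \<Rightarrow> bool" where
  "L2ok U \<longleftrightarrow> U \<in> borel_measurable lebesgue \<and> integrable lebesgue (\<lambda>x. (cmod (U x))^2)"

lemma L2ok_diff:
  assumes "L2ok U" "L2ok V" shows "L2ok (\<lambda>x. U x - V x)"
proof -
  have [measurable]: "U \<in> borel_measurable lebesgue" "V \<in> borel_measurable lebesgue"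
    and iU: "integrable lebesgue (\<lambda>x. (cmod (U x))^2)" and iV: "integrable lebesgue (\<lambda>x. (cmod (V x))^2)"
    using assms unfolding L2ok_def by auto
  have "integrable lebesgue (\<lambda>x. (cmod (U x - V x))^2)"
  proof (rule Bochner_Integration.integrable_bound[where f="\<lambda>x. 2 * (cmod (U x))^2 + 2 * (cmod (V x))^2"])
    show "integrable lebesgue (\<lambda>x. 2 * (cmod (U x))^2 + 2 * (cmod (V x))^2)" using iU iV by auto
    show "(\<lambda>x. (cmod (U x - V x))^2) \<in> borel_measurable lebesgue" by measurable
    show "AE x in lebesgue. norm ((cmod (U x - V x))^2) \<le> norm (2 * (cmod (U x))^2 + 2 * (cmod (V x))^2)"
    proof (rule AE_I2)
      fix x
      have t: "cmod (U x - V x) \<le> cmod (U x) + cmod (V x)" by (rule norm_triangle_ineq4)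
      have "(cmod (U x - V x))^2 \<le> (cmod (U x) + cmod (V x))^2" by (rule power_mono[OF t]) simp
      also have "\<dots> \<le> 2 * (cmod (U x))^2 + 2 * (cmod (V x))^2"
        using sum_squares_bound[of "cmod (U x)" "cmod (V x)"] by (simp add: power2_eq_square algebra_simps)
      finally show "norm ((cmod (U x - V x))^2) \<le> norm (2 * (cmod (U x))^2 + 2 * (cmod (V x))^2)" by simp
    qed
  qed
  moreover have "(\<lambda>x. U x - V x) \<in> borel_measurable lebesgue" by measurable
  ultimately show ?thesis unfolding L2ok_def by blast
qed

lemma L2ok_mult_bdd:
  assumes "L2ok U" and [measurable]: "Q \<in> borel_measurable lebesgue" and b: "\<And>x. cmod (Q x) \<le> B"
  shows "L2ok (\<lambda>x. U x * Q x)"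
proof -
  have [measurable]: "U \<in> borel_measurable lebesgue" and iU: "integrable lebesgue (\<lambda>x. (cmod (U x))^2)"
    using assms unfolding L2ok_def by auto
  have "integrable lebesgue (\<lambda>x. (cmod (U x * Q x))^2)"
  proof (rule Bochner_Integration.integrable_bound[where f="\<lambda>x. B^2 * (cmod (U x))^2"])
    show "integrable lebesgue (\<lambda>x. B^2 * (cmod (U x))^2)" using iU by auto
    show "(\<lambda>x. (cmod (U x * Q x))^2) \<in> borel_measurable lebesgue" by measurable
    show "AE x in lebesgue. norm ((cmod (U x * Q x))^2) \<le> norm (B^2 * (cmod (U x))^2)"
    proof (rule AE_I2)
      fix x
      have "(cmod (Q x))^2 \<le> B^2" by (rule power_mono[OF b]) simp
      then have "(cmod (U x))^2 * (cmod (Q x))^2 \<le> (cmod (U x))^2 * B^2" by (rule mult_left_mono) simp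
      then show "norm ((cmod (U x * Q x))^2) \<le> norm (B^2 * (cmod (U x))^2)"
        by (simp add: norm_mult power_mult_distrib mult.commute)
    qed
  qed
  moreover have "(\<lambda>x. U x * Q x) \<in> borel_measurable lebesgue" by measurable
  ultimately show ?thesis unfolding L2ok_def by blast
qed

lemma int_mult_bdd:
  fixes W Q :: "real \<Rightarrow> complex"
  assumes W: "integrable lebesgue W" and [measurable]: "Q \<in> borel_measurable lebesgue" and b: "\<And>x. cmod (Q x) \<le> B"
  shows "integrable lebesgue (\<lambda>x. W x * Q x)"
proof (rule Bochner_Integration.integrable_bound[where f="\<lambda>x. B * cmod (W x)"])
  have [measurable]: "W \<in> borel_measurable lebesgue" using W by auto
  show "integrable lebesgue (\<lambda>x. B * cmod (W x))" using W by auto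
  show "(\<lambda>x. W x * Q x) \<in> borel_measurable lebesgue" by measurable
  show "AE x in lebesgue. norm (W x * Q x) \<le> norm (B * cmod (W x))"
  proof (rule AE_I2)
    fix x
    have "cmod (W x) * cmod (Q x) \<le> cmod (W x) * B" by (rule mult_left_mono[OF b]) simp
    moreover have "0 \<le> B" using b[of x] norm_ge_zero order.trans by blast
    ultimately show "norm (W x * Q x) \<le> norm (B * cmod (W x))" by (simp add: norm_mult mult.commute)
  qed
qed

lemma L2_on_ind:
  assumes "L2_on E u" shows "L2ok (\<lambda>\<theta>. indicator (circ_set E) \<theta> *\<^sub>R u (cis \<theta>))"
proof -
  have "(\<lambda>\<theta>. (cmod (indicator (circ_set E) \<theta> *\<^sub>R u (cis \<theta>)))^2) = (\<lambda>\<theta>. indicator (circ_set E) \<theta> *\<^sub>R (cmod (u (cis \<theta>)))^2)"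
    by (auto split: split_indicator)
  then show ?thesis using assms unfolding L2ok_def L2_on_def set_borel_measurable_def set_integrable_def by simp
qed

lemma L2_on_sub:
  assumes "L2_on (sphere 0 1) u" and m: "circ_set E \<in> sets lebesgue"
  shows "L2_on E u"
proof -
  have sub: "circ_set E \<subseteq> {0..2*pi}" unfolding circ_set_def by auto
  have [measurable]: "(\<lambda>\<theta>. indicator {0..2*pi} \<theta> *\<^sub>R u (cis \<theta>)) \<in> borel_measurable lebesgue"
    and i: "integrable lebesgue (\<lambda>\<theta>. indicator {0..2*pi} \<theta> *\<^sub>R (cmod (u (cis \<theta>)))^2)"
    using assms unfolding L2_on_def circ_set_sphere set_borel_measurable_def set_integrable_def by auto
  have [measurable]: "circ_set E \<in> sets lebesgue" by (rule m)
  have e1: "(\<lambda>\<theta>. indicator (circ_set E) \<theta> *\<^sub>R u (cis \<theta>)) = (\<lambda>\<theta>. indicator (circ_set E) \<theta> *\<^sub>R (indicator {0..2*pi} \<theta> *\<^sub>R u (cis \<theta>)))"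
    using sub by (intro ext) (auto simp: indicator_def subset_iff)
  have e2: "(\<lambda>\<theta>. indicator (circ_set E) \<theta> *\<^sub>R (cmod (u (cis \<theta>)))^2) = (\<lambda>\<theta>. indicator (circ_set E) \<theta> *\<^sub>R (indicator {0..2*pi} \<theta> *\<^sub>R (cmod (u (cis \<theta>)))^2))"
    using sub by (intro ext) (auto simp: indicator_def subset_iff)
  have "(\<lambda>\<theta>. indicator (circ_set E) \<theta> *\<^sub>R u (cis \<theta>)) \<in> borel_measurable lebesgue"
    unfolding e1 by measurable
  moreover have "integrable lebesgue (\<lambda>\<theta>. indicator (circ_set E) \<theta> *\<^sub>R (cmod (u (cis \<theta>)))^2)"
    unfolding e2 by (rule integrable_mult_indicator[OF m i])
  ultimately show ?thesis unfolding L2_on_def set_borel_measurable_def set_integrable_def by simp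
qed

lemma mob_lemma:
  assumes t: "0 < t" and e: "0 < \<epsilon>" "\<epsilon> \<le> Re q" and B: "cmod q \<le> Bq" and tl: "t \<le> \<epsilon> / Bq^2"
  shows "cmod (1 - complex_of_real t * q) \<le> 1"
proof -
  have Bq: "0 < Bq" using B e complex_Re_le_cmod[of q] by linarith
  have "t * Bq^2 \<le> \<epsilon>" using tl Bq by (simp add: field_simps)
  have "(cmod q)^2 \<le> Bq^2" by (rule power_mono[OF B]) simp
  then have "t^2 * (cmod q)^2 \<le> t^2 * Bq^2" by (rule mult_left_mono) simp
  also have "\<dots> = t * (t * Bq^2)" by (simp add: power2_eq_square)
  also have "\<dots> \<le> t * \<epsilon>" using \<open>t * Bq^2 \<le> \<epsilon>\<close> t by simp
  finally have X: "t^2 * (cmod q)^2 \<le> t * \<epsilon>" .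
  have "(cmod (1 - complex_of_real t * q))^2 = 1 - 2 * t * Re q + t^2 * (cmod q)^2"
    unfolding cmod_power2 by (simp add: power2_eq_square algebra_simps)
  also have "\<dots> \<le> 1"
  proof -
    have "t * \<epsilon> \<le> t * Re q" using e t by (intro mult_left_mono) auto
    moreover have "2 * t * Re q = 2 * (t * Re q)" by simp
    moreover have "0 \<le> t * \<epsilon>" using e t by simp
    ultimately show ?thesis using X by linarith
  qed
  finally have "(cmod (1 - complex_of_real t * q))^2 \<le> 1^2" by simp
  then show ?thesis by (rule power2_le_imp_le) simp
qed



lemma herg_cont_ball:
  assumes "integrable lebesgue hh" shows "continuous_on (ball 0 1) (herg hh)"
  using herg_cont[OF assms compact_sphere[of 0 1] closed_empty, of] by simp

lemma P_cont:
  assumes "integrable lebesgue hh" "0 \<le> r" "r < 1"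
  shows "continuous_on UNIV (\<lambda>\<theta>. herg hh (complex_of_real r * cis \<theta>))"
proof (rule continuous_on_compose2[OF herg_cont_ball[OF assms(1)]])
  show "continuous_on UNIV (\<lambda>\<theta>. complex_of_real r * cis \<theta>)"
    by (intro continuous_intros continuous_on_cis)
  show "(\<lambda>\<theta>. complex_of_real r * cis \<theta>) ` UNIV \<subseteq> ball 0 1"
    using assms by (auto simp: norm_mult)
qed

lemma P_meas[measurable]:
  assumes "integrable lebesgue hh" "0 \<le> r" "r < 1"
  shows "(\<lambda>\<theta>. herg hh (complex_of_real r * cis \<theta>)) \<in> borel_measurable lebesgue"
  by (rule measurable_completion) (simp add: borel_measurable_continuous_onI P_cont[OF assms])

lemma P_bound:
  assumes hh: "integrable lebesgue hh" and r: "0 \<le> r" "r < 1"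
  shows "cmod (herg hh (complex_of_real r * cis \<theta>)) \<le> 1/(2*pi) * (2/(1-r) * integral\<^sup>L lebesgue (\<lambda>\<theta>. \<bar>hh \<theta>\<bar>))"
proof (rule herg_bound[OF hh])
  show "0 < 1 - r" using r by simp
  show "cmod (complex_of_real r * cis \<theta>) \<le> 1" using r by (simp add: norm_mult)
  have "1 - r \<le> cmod (cis \<theta>' - complex_of_real r * cis \<theta>)" for \<theta>'
    using norm_triangle_ineq2[of "cis \<theta>'" "complex_of_real r * cis \<theta>"] r by (simp add: norm_mult)
  then show "AE \<theta>' in lebesgue. hh \<theta>' \<noteq> 0 \<longrightarrow> 1 - r \<le> cmod (cis \<theta>' - complex_of_real r * cis \<theta>)"
    by simp
qed

lemma P_series:
  assumes hh: "integrable lebesgue hh" and r: "0 \<le> r" "r < 1"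
  obtains A0 \<gamma> where "summable (\<lambda>k. cmod (\<gamma> k))"
    "\<And>\<theta>. herg hh (complex_of_real r * cis \<theta>) = A0 + (\<Sum>k. \<gamma> k * cis (real k * \<theta>))"
proof -
  define c where "c = complex_of_real (1/(2*pi))"
  define \<gamma> where "\<gamma> k = c * 2 * (complex_of_real (r^k) * beta hh k)" for k
  define A0 where "A0 = c * (- complex_of_real (integral\<^sup>L lebesgue hh))"
  have "summable (\<lambda>k. cmod (\<gamma> k))"
  proof (rule summable_comparison_test[where g="\<lambda>k. cmod c * 2 * (r^k * integral\<^sup>L lebesgue (\<lambda>\<theta>. \<bar>hh \<theta>\<bar>))"])
    show "summable (\<lambda>k. cmod c * 2 * (r^k * integral\<^sup>L lebesgue (\<lambda>\<theta>. \<bar>hh \<theta>\<bar>)))"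
      using r by (intro summable_mult summable_mult2 summable_geometric) auto
    show "\<exists>N. \<forall>n\<ge>N. norm (cmod (\<gamma> n)) \<le> cmod c * 2 * (r ^ n * integral\<^sup>L lebesgue (\<lambda>\<theta>. \<bar>hh \<theta>\<bar>))"
    proof (intro exI allI impI)
      fix n
      have "cmod (beta hh n) \<le> integral\<^sup>L lebesgue (\<lambda>\<theta>. \<bar>hh \<theta>\<bar>)" by (rule beta_bound[OF hh])
      then have "r^n * cmod (beta hh n) \<le> r^n * integral\<^sup>L lebesgue (\<lambda>\<theta>. \<bar>hh \<theta>\<bar>)"
        using r by (intro mult_left_mono) auto
      then show "norm (cmod (\<gamma> n)) \<le> cmod c * 2 * (r ^ n * integral\<^sup>L lebesgue (\<lambda>\<theta>. \<bar>hh \<theta>\<bar>))"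
        unfolding \<gamma>_def using r by (simp add: norm_mult norm_power mult_left_mono)
    qed
  qed
  moreover have "herg hh (complex_of_real r * cis \<theta>) = A0 + (\<Sum>k. \<gamma> k * cis (real k * \<theta>))" for \<theta>
  proof -
    let ?w = "complex_of_real r * cis \<theta>"
    have w: "cmod ?w < 1" using r by (simp add: norm_mult)
    have pw: "?w ^ k * beta hh k = complex_of_real (r^k) * beta hh k * cis (real k * \<theta>)" for k
    proof -
      have "?w ^ k = complex_of_real (r^k) * cis (real k * \<theta>)"
        by (simp only: power_mult_distrib Complex.DeMoivre of_real_power)
      then show ?thesis by (simp only: mult_ac)
    qed
    have s: "summable (\<lambda>k. ?w ^ k * beta hh k)" by (rule herg_series(2)[OF hh w])
    have "herg hh ?w = c * (- complex_of_real (integral\<^sup>L lebesgue hh) + 2 * (\<Sum>k. ?w ^ k * beta hh k))"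
      unfolding c_def by (rule herg_series(1)[OF hh w])
    also have "\<dots> = A0 + (c * 2) * (\<Sum>k. ?w ^ k * beta hh k)" unfolding A0_def by (simp add: algebra_simps)
    also have "(c * 2) * (\<Sum>k. ?w ^ k * beta hh k) = (\<Sum>k. (c * 2) * (?w ^ k * beta hh k))"
      by (rule suminf_mult[OF s, symmetric])
    also have "\<dots> = (\<Sum>k. \<gamma> k * cis (real k * \<theta>))"
      unfolding pw \<gamma>_def by (simp add: algebra_simps)
    finally show ?thesis .
  qed
  ultimately show ?thesis using that by blast
qed

lemma norm_on_eq:
  "norm_on E F = sqrt (1/(2*pi) * integral\<^sup>L lebesgue (\<lambda>\<theta>. (cmod (indicator (circ_set E) \<theta> *\<^sub>R F (cis \<theta>)))^2))"
proof -
  have "(LINT \<theta>:circ_set E|lebesgue. (cmod (F (cis \<theta>)))^2) = integral\<^sup>L lebesgue (\<lambda>\<theta>. (cmod (indicator (circ_set E) \<theta> *\<^sub>R F (cis \<theta>)))^2)"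
    unfolding set_lebesgue_integral_def
    by (intro Bochner_Integration.integral_cong) (auto split: split_indicator)
  then show ?thesis unfolding norm_on_def re_inner_self by simp
qed



lemma r_level:
  assumes hh: "integrable lebesgue hh" and hpos: "AE \<theta> in lebesgue. 0 \<le> hh \<theta>"
    and sol: "bep_solution I J f g0" and fL2: "L2_on I f" and SIm: "circ_set I \<in> sets lebesgue"
    and r: "0 \<le> r" "r < 1"
  shows "0 \<le> Re (integral\<^sup>L lebesgue (\<lambda>\<theta>. (indicator (circ_set I) \<theta> *\<^sub>R ((f (cis \<theta>) - g0 (cis \<theta>)) * cnj (g0 (cis \<theta>))))
            * cnj (herg hh (complex_of_real r * cis \<theta>))))"
proof -
  have feas: "bep_feasible J g0" and opt: "\<And>g. bep_feasible J g \<Longrightarrow> norm_on I (\<lambda>z. f z - g0 z) \<le> norm_on I (\<lambda>z. f z - g z)"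
    using sol unfolding bep_solution_def by auto
  have H2g: "H2 g0" and g0J: "AE \<theta> in lebesgue. \<theta> \<in> circ_set J \<longrightarrow> cmod (g0 (cis \<theta>)) \<le> 1"
    using feas unfolding bep_feasible_def by auto
  have g0L2: "L2_on I g0" using H2g SIm L2_on_sub unfolding H2_def by blast
  define F1 where "F1 \<theta> = indicator (circ_set I) \<theta> *\<^sub>R f (cis \<theta>)" for \<theta>
  define G1 where "G1 \<theta> = indicator (circ_set I) \<theta> *\<^sub>R g0 (cis \<theta>)" for \<theta>
  have F1L: "L2ok F1" unfolding F1_def by (rule L2_on_ind[OF fL2])
  have G1L: "L2ok G1" unfolding G1_def by (rule L2_on_ind[OF g0L2])
  define U where "U \<theta> = F1 \<theta> - G1 \<theta>" for \<theta>
  have UL: "L2ok U" unfolding U_def by (rule L2ok_diff[OF F1L G1L])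
  have [measurable]: "U \<in> borel_measurable lebesgue" "G1 \<in> borel_measurable lebesgue"
    and iU: "integrable lebesgue (\<lambda>x. (cmod (U x))^2)" and iG: "integrable lebesgue (\<lambda>x. (cmod (G1 x))^2)"
    using UL G1L unfolding L2ok_def by auto
  define W where "W \<theta> = U \<theta> * cnj (G1 \<theta>)" for \<theta>
  have Wi: "integrable lebesgue W" unfolding W_def by (rule int_prod) (use iU iG in auto)
  have Weq: "W \<theta> = indicator (circ_set I) \<theta> *\<^sub>R ((f (cis \<theta>) - g0 (cis \<theta>)) * cnj (g0 (cis \<theta>)))" for \<theta>
    unfolding W_def U_def F1_def G1_def by (auto split: split_indicator)
  define P where "P \<theta> = herg hh (complex_of_real r * cis \<theta>)" for \<theta>
  have Pm[measurable]: "P \<in> borel_measurable lebesgue" unfolding P_def by (rule P_meas[OF hh r])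
  define Bp where "Bp = 1/(2*pi) * (2/(1-r) * integral\<^sup>L lebesgue (\<lambda>\<theta>. \<bar>hh \<theta>\<bar>))"
  have Pb: "cmod (P \<theta>) \<le> Bp" for \<theta> unfolding P_def Bp_def by (rule P_bound[OF hh r])
  have Bp0: "0 \<le> Bp" using Pb[of 0] norm_ge_zero order.trans by blast
  have PRe: "0 \<le> Re (P \<theta>)" for \<theta> unfolding P_def
    by (rule herg_Re_nonneg[OF hh hpos]) (use r in \<open>simp add: norm_mult\<close>)
  obtain A0 \<gamma> where sg: "summable (\<lambda>k. cmod (\<gamma> k))"
    and Pser: "\<And>\<theta>. P \<theta> = A0 + (\<Sum>k. \<gamma> k * cis (real k * \<theta>))"
    using P_series[OF hh r] unfolding P_def by metis
  have WPi: "integrable lebesgue (\<lambda>\<theta>. W \<theta> * cnj (P \<theta>))"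
    by (rule int_mult_bdd[OF Wi, where B=Bp]) (use Pb in auto)
  have main: "0 \<le> Re (integral\<^sup>L lebesgue (\<lambda>\<theta>. W \<theta> * cnj (P \<theta>))) + \<epsilon> * Re (integral\<^sup>L lebesgue W)"
    if e: "0 < \<epsilon>" for \<epsilon>
  proof -
    define Q where "Q \<theta> = P \<theta> + complex_of_real \<epsilon>" for \<theta>
    define Bq where "Bq = Bp + \<epsilon>"
    have Qb: "cmod (Q \<theta>) \<le> Bq" for \<theta>
      unfolding Q_def Bq_def using norm_triangle_ineq[of "P \<theta>" "complex_of_real \<epsilon>"] Pb[of \<theta>] e by simp
    have QRe: "\<epsilon> \<le> Re (Q \<theta>)" for \<theta> unfolding Q_def using PRe[of \<theta>] by simp
    have Bq: "0 < Bq" unfolding Bq_def using Bp0 e by simp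
    define t0 where "t0 = \<epsilon> / Bq^2"
    have t0: "0 < t0" unfolding t0_def using e Bq by simp
    have [measurable]: "Q \<in> borel_measurable lebesgue" unfolding Q_def by measurable
    define V where "V \<theta> = G1 \<theta> * Q \<theta>" for \<theta>
    have VL: "L2ok V" unfolding V_def by (rule L2ok_mult_bdd[OF G1L _ Qb]) measurable
    have [measurable]: "V \<in> borel_measurable lebesgue" and iV: "integrable lebesgue (\<lambda>x. (cmod (V x))^2)"
      using VL unfolding L2ok_def by auto
    have q: "0 \<le> Re (integral\<^sup>L lebesgue (\<lambda>x. U x * cnj (V x)))"
    proof (rule quad_lemma[OF _ _ iU iV t0])
      fix t assume t: "0 < t" "t \<le> t0"
      define M where "M z = 1 - complex_of_real t * (herg hh (complex_of_real r * z) + complex_of_real \<epsilon>)" for z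
      have Mc: "M (cis \<theta>) = 1 - complex_of_real t * Q \<theta>" for \<theta> unfolding M_def Q_def P_def ..
      have Mser: "M (cis \<theta>) = (1 - complex_of_real t * (A0 + complex_of_real \<epsilon>)) + (\<Sum>k. (- complex_of_real t * \<gamma> k) * cis (real k * \<theta>))" for \<theta>
      proof -
        have sm: "summable (\<lambda>k. \<gamma> k * cis (real k * \<theta>))"
          by (rule summable_norm_cancel) (simp add: norm_mult sg)
        have "(\<Sum>k. (- complex_of_real t * \<gamma> k) * cis (real k * \<theta>)) = (- complex_of_real t) * (\<Sum>k. \<gamma> k * cis (real k * \<theta>))"
          using suminf_mult[OF sm, of "- complex_of_real t"] by (simp add: mult.assoc)
        then show ?thesis unfolding Mc Q_def Pser by (simp add: algebra_simps)
      qed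
      have sg2: "summable (\<lambda>k. cmod (- complex_of_real t * \<gamma> k))"
        using summable_mult[OF sg, of "\<bar>t\<bar>"] by (simp add: norm_mult)
      have H2G: "H2 (\<lambda>z. g0 z * M z)" by (rule H2_mult[OF H2g sg2 Mser])
      have Mb: "cmod (M (cis \<theta>)) \<le> 1" for \<theta>
        unfolding Mc by (rule mob_lemma[OF t(1) e QRe Qb]) (use t in \<open>simp add: t0_def\<close>)
      have "bep_feasible J (\<lambda>z. g0 z * M z)"
        unfolding bep_feasible_def
      proof (intro conjI H2G)
        show "AE \<theta> in lebesgue. \<theta> \<in> circ_set J \<longrightarrow> cmod (g0 (cis \<theta>) * M (cis \<theta>)) \<le> 1"
          using g0J
        proof eventually_elim
          case (elim \<theta>)
          show ?case
          proof
            assume "\<theta> \<in> circ_set J"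
            then have "cmod (g0 (cis \<theta>)) \<le> 1" using elim by simp
            then show "cmod (g0 (cis \<theta>) * M (cis \<theta>)) \<le> 1"
              unfolding norm_mult using Mb[of \<theta>] by (simp add: mult_le_one)
          qed
        qed
      qed
      from opt[OF this] have no: "norm_on I (\<lambda>z. f z - g0 z) \<le> norm_on I (\<lambda>z. f z - g0 z * M z)" .
      have e1: "indicator (circ_set I) \<theta> *\<^sub>R (f (cis \<theta>) - g0 (cis \<theta>)) = U \<theta>" for \<theta>
        unfolding U_def F1_def G1_def by (auto split: split_indicator)
      have e2: "indicator (circ_set I) \<theta> *\<^sub>R (f (cis \<theta>) - g0 (cis \<theta>) * M (cis \<theta>)) = U \<theta> + complex_of_real t * V \<theta>" for \<theta>
        unfolding U_def F1_def G1_def V_def Mc by (auto split: split_indicator simp: algebra_simps)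
      have "sqrt (1/(2*pi) * integral\<^sup>L lebesgue (\<lambda>\<theta>. (cmod (U \<theta>))^2))
          \<le> sqrt (1/(2*pi) * integral\<^sup>L lebesgue (\<lambda>\<theta>. (cmod (U \<theta> + complex_of_real t * V \<theta>))^2))"
        using no unfolding norm_on_eq e1 e2 .
      then show "integral\<^sup>L lebesgue (\<lambda>\<theta>. (cmod (U \<theta>))^2) \<le> integral\<^sup>L lebesgue (\<lambda>\<theta>. (cmod (U \<theta> + complex_of_real t * V \<theta>))^2)"
        by (simp add: divide_le_cancel)
    qed measurable
    have pt: "U x * cnj (V x) = W x * cnj (P x) + complex_of_real \<epsilon> * W x" for x
      unfolding V_def W_def Q_def by (simp add: algebra_simps)
    have "integral\<^sup>L lebesgue (\<lambda>x. U x * cnj (V x)) = integral\<^sup>L lebesgue (\<lambda>x. W x * cnj (P x)) + complex_of_real \<epsilon> * integral\<^sup>L lebesgue W"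
      unfolding pt using WPi Wi by simp
    then show ?thesis using q by simp
  qed
  have "0 \<le> Re (integral\<^sup>L lebesgue (\<lambda>\<theta>. W \<theta> * cnj (P \<theta>)))"
  proof (rule ccontr)
    define X where "X = Re (integral\<^sup>L lebesgue (\<lambda>\<theta>. W \<theta> * cnj (P \<theta>)))"
    define Y where "Y = Re (integral\<^sup>L lebesgue W)"
    assume "\<not> 0 \<le> Re (integral\<^sup>L lebesgue (\<lambda>\<theta>. W \<theta> * cnj (P \<theta>)))"
    then have X: "X < 0" unfolding X_def by simp
    define \<epsilon> where "\<epsilon> = - X / (2 * (\<bar>Y\<bar> + 1))"
    have e: "0 < \<epsilon>" unfolding \<epsilon>_def using X by (intro divide_pos_pos) auto
    have "\<epsilon> * \<bar>Y\<bar> \<le> - X / 2"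
    proof -
      have "\<epsilon> * \<bar>Y\<bar> = (- X / 2) * (\<bar>Y\<bar> / (\<bar>Y\<bar> + 1))" unfolding \<epsilon>_def by (simp add: field_simps)
      also have "\<dots> \<le> (- X / 2) * 1" using X by (intro mult_left_mono) auto
      finally show ?thesis by simp
    qed
    moreover have "\<epsilon> * Y \<le> \<epsilon> * \<bar>Y\<bar>" using e by (intro mult_left_mono) auto
    ultimately show False using main[OF e] X unfolding X_def[symmetric] Y_def[symmetric] by linarith
  qed
  then show ?thesis unfolding P_def Weq .
qed



theorem mainTheorem10:
  fixes I J :: "complex set" and f g0 :: "complex \<Rightarrow> complex" and h :: "complex \<Rightarrow> real"
  assumes "I \<subseteq> sphere 0 1" and "J = sphere 0 1 - I"
    and "tmeasurable I" and "ell I > 0" and "ell J > 0"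
    and "L2_on I f"
    and "bep_solution I J f g0"
    and "Linf_T h"
    and "AE \<theta> in lebesgue. \<theta> \<in> {0..2*pi} \<longrightarrow> h (cis \<theta>) \<ge> 0"
    and "ess_supp_in h (Tc interior_of J)"
  shows "continuous_on (ball 0 1 \<union> Tc closure_of I) (herglotz J h) \<and>
         Re (inner_on I (\<lambda>z. (f z - g0 z) * cnj (g0 z)) (herglotz J h)) \<ge> 0"
proof -
  note Isub = assms(1) and Jdef = assms(2) and fL2 = assms(6) and sol = assms(7)
  define SI where "SI = circ_set I"
  define SJ where "SJ = circ_set J"
  have SIm[measurable]: "SI \<in> sets lebesgue" using assms(3) unfolding tmeasurable_def SI_def .
  have SJeq: "SJ = {0..2*pi} - SI" unfolding SJ_def SI_def circ_set_def Jdef by auto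
  have box[measurable]: "{0..2*pi} \<in> sets lebesgue" by simp
  have SJm[measurable]: "SJ \<in> sets lebesgue" unfolding SJeq by measurable
  have SJsub: "SJ \<subseteq> {0..2*pi}" unfolding SJeq by auto
  define hh where "hh \<theta> = indicator SJ \<theta> * h (cis \<theta>)" for \<theta>
  have herg_eq: "herglotz J h = herg hh" unfolding hh_def SJ_def by (intro ext herglotz_eq)
  have hm0[measurable]: "(\<lambda>\<theta>. indicator {0..2*pi} \<theta> *\<^sub>R h (cis \<theta>)) \<in> borel_measurable lebesgue"
    and "\<exists>B. AE \<theta> in lebesgue. \<theta> \<in> {0..2*pi} \<longrightarrow> \<bar>h (cis \<theta>)\<bar> \<le> B"
    using assms(8) unfolding Linf_T_def set_borel_measurable_def by auto
  then obtain B where hB: "AE \<theta> in lebesgue. \<theta> \<in> {0..2*pi} \<longrightarrow> \<bar>h (cis \<theta>)\<bar> \<le> B" by blast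
  have hheq: "hh = (\<lambda>\<theta>. indicator SJ \<theta> * (indicator {0..2*pi} \<theta> *\<^sub>R h (cis \<theta>)))"
    unfolding hh_def using SJsub by (intro ext) (auto simp: indicator_def subset_iff)
  have hhm[measurable]: "hh \<in> borel_measurable lebesgue" unfolding hheq by measurable
  have hhi: "integrable lebesgue hh"
  proof (rule Bochner_Integration.integrable_bound[where f="\<lambda>\<theta>. indicator {0..2*pi} \<theta> *\<^sub>R B"])
    show "integrable lebesgue (\<lambda>\<theta>. indicator {0..2*pi} \<theta> *\<^sub>R B)"
      by (rule integrable_indicator) auto
    show "hh \<in> borel_measurable lebesgue" by measurable
    show "AE \<theta> in lebesgue. norm (hh \<theta>) \<le> norm (indicator {0..2*pi} \<theta> *\<^sub>R B)"
      using hB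
    proof eventually_elim
      case (elim \<theta>)
      show ?case
      proof (cases "\<theta> \<in> SJ")
        case True
        then have "\<theta> \<in> {0..2*pi}" using SJsub by auto
        then show ?thesis using elim True by (auto simp: hh_def)
      qed (simp add: hh_def)
    qed
  qed
  have hpos: "AE \<theta> in lebesgue. 0 \<le> hh \<theta>"
    using assms(9) by eventually_elim (use SJsub in \<open>auto simp: hh_def indicator_def\<close>)
  obtain K where Kc: "closedin Tc K" and KJ: "K \<subseteq> Tc interior_of J"
    and Kae: "AE \<theta> in lebesgue. \<theta> \<in> {0..2*pi} \<longrightarrow> cis \<theta> \<notin> K \<longrightarrow> h (cis \<theta>) = 0"
    using assms(10) unfolding ess_supp_in_def by blast
  have haeK: "AE \<theta> in lebesgue. hh \<theta> \<noteq> 0 \<longrightarrow> cis \<theta> \<in> K"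
    using Kae by eventually_elim (use SJsub in \<open>auto simp: hh_def indicator_def\<close>)
  define C where "C = Tc closure_of I"
  have clI: "closure I \<subseteq> sphere 0 1" using Isub by (intro closure_minimal) auto
  have Ceq: "C = closure I"
    unfolding C_def Tc_def closure_of_subtopology euclidean_closure_of using Isub clI by (auto simp: Int_absorb1)
  have Ccl: "closed C" unfolding Ceq by simp
  have Cb: "C \<subseteq> cball 0 1" using clI unfolding Ceq by auto
  have top: "topspace Tc = sphere 0 1" unfolding Tc_def by simp
  have intJ: "Tc interior_of J = sphere 0 1 - C"
    unfolding C_def Jdef using interior_of_complement[of Tc I] top by simp
  have Kcl: "closed K" and Ksub: "K \<subseteq> sphere 0 1"
    using Kc unfolding Tc_def by (auto simp: closedin_closed_eq)
  have Kco: "compact K" using Kcl Ksub bounded_subset[OF bounded_sphere Ksub] by (simp add: compact_eq_bounded_closed)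
  have KC: "K \<inter> C = {}" using KJ unfolding intJ by auto
  have cont: "continuous_on (ball 0 1 \<union> C) (herg hh)"
    by (rule herg_cont[OF hhi Kco Ccl KC Cb haeK])
  have part2: "0 \<le> Re (inner_on I (\<lambda>z. (f z - g0 z) * cnj (g0 z)) (herg hh))"
  proof -
    obtain d where d: "d > 0" and dd: "\<And>k y. k \<in> K \<Longrightarrow> y \<in> C \<Longrightarrow> d \<le> dist k y"
      using separate_compact_closed[OF Kco Ccl KC] by blast
    have feas: "bep_feasible J g0" using sol unfolding bep_solution_def by auto
    have H2g: "H2 g0" using feas unfolding bep_feasible_def by auto
    have g0L2: "L2_on I g0" using H2g assms(3) L2_on_sub unfolding H2_def tmeasurable_def by blast
    define F1 where "F1 \<theta> = indicator SI \<theta> *\<^sub>R f (cis \<theta>)" for \<theta>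
    define G1 where "G1 \<theta> = indicator SI \<theta> *\<^sub>R g0 (cis \<theta>)" for \<theta>
    have F1L: "L2ok F1" unfolding F1_def SI_def by (rule L2_on_ind[OF fL2])
    have G1L: "L2ok G1" unfolding G1_def SI_def by (rule L2_on_ind[OF g0L2])
    define U where "U \<theta> = F1 \<theta> - G1 \<theta>" for \<theta>
    have UL: "L2ok U" unfolding U_def by (rule L2ok_diff[OF F1L G1L])
    have [measurable]: "U \<in> borel_measurable lebesgue" "G1 \<in> borel_measurable lebesgue"
      and iU: "integrable lebesgue (\<lambda>x. (cmod (U x))^2)" and iG: "integrable lebesgue (\<lambda>x. (cmod (G1 x))^2)"
      using UL G1L unfolding L2ok_def by auto
    define W where "W \<theta> = indicator SI \<theta> *\<^sub>R ((f (cis \<theta>) - g0 (cis \<theta>)) * cnj (g0 (cis \<theta>)))" for \<theta>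
    have Weq: "W \<theta> = U \<theta> * cnj (G1 \<theta>)" for \<theta>
      unfolding W_def U_def F1_def G1_def by (auto split: split_indicator)
    have Wi: "integrable lebesgue W" unfolding Weq[abs_def] by (rule int_prod) (use iU iG in auto)
    have Wm[measurable]: "W \<in> borel_measurable lebesgue" using Wi by auto
    have W0: "\<theta> \<notin> SI \<Longrightarrow> W \<theta> = 0" for \<theta> unfolding W_def by simp
    define rn where "rn n = 1 - inverse (real (Suc (Suc n)))" for n
    have rn0: "0 \<le> rn n" "rn n < 1" for n unfolding rn_def by (auto simp: field_simps)
    have rnl: "rn \<longlonglongrightarrow> 1"
    proof -
      have "(\<lambda>n. inverse (real (Suc (Suc n)))) \<longlonglongrightarrow> 0"
        using LIMSEQ_Suc[OF LIMSEQ_inverse_real_of_nat] .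
      then show ?thesis unfolding rn_def using tendsto_diff[OF tendsto_const, of _ 0 sequentially 1] by simp
    qed
    define s where "s n \<theta> = W \<theta> * cnj (herg hh (complex_of_real (rn n) * cis \<theta>))" for n \<theta>
    define L where "L \<theta> = W \<theta> * cnj (herg hh (cis \<theta>))" for \<theta>
    have sm[measurable]: "s n \<in> borel_measurable lebesgue" for n
      unfolding s_def using P_meas[OF hhi rn0[of n]] by measurable
    have lim: "(\<lambda>n. s n \<theta>) \<longlonglongrightarrow> L \<theta>" for \<theta>
    proof (cases "\<theta> \<in> SI")
      case True
      then have cC: "cis \<theta> \<in> C" unfolding SI_def circ_set_def Ceq using closure_subset by auto
      have xl: "(\<lambda>n. complex_of_real (rn n) * cis \<theta>) \<longlonglongrightarrow> cis \<theta>"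
        using tendsto_mult[OF tendsto_of_real[OF rnl] tendsto_const[of "cis \<theta>"]] by simp
      have "(\<lambda>n. herg hh (complex_of_real (rn n) * cis \<theta>)) \<longlonglongrightarrow> herg hh (cis \<theta>)"
      proof (rule continuous_on_tendsto_compose[OF cont xl])
        show "cis \<theta> \<in> ball 0 1 \<union> C" using cC by simp
        show "\<forall>\<^sub>F n in sequentially. complex_of_real (rn n) * cis \<theta> \<in> ball 0 1 \<union> C"
          using rn0 by (auto simp: norm_mult)
      qed
      then show ?thesis unfolding s_def L_def by (intro tendsto_intros)
    next
      case False
      then show ?thesis unfolding s_def L_def W0[OF False] by simp
    qed
    have Lm[measurable]: "L \<in> borel_measurable lebesgue"
      by (rule borel_measurable_LIMSEQ_metric[OF sm lim])
    define Cb where "Cb = 1/(2*pi) * (2/(d/2) * integral\<^sup>L lebesgue (\<lambda>\<theta>. \<bar>hh \<theta>\<bar>))"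
    have hb: "cmod (herg hh (complex_of_real r * cis \<theta>)) \<le> Cb" if "\<theta> \<in> SI" "0 \<le> r" "r \<le> 1" for \<theta> r
      unfolding Cb_def
    proof (rule herg_bound[OF hhi])
      show "0 < d/2" using d by simp
      show "cmod (complex_of_real r * cis \<theta>) \<le> 1" using that by (simp add: norm_mult)
      have cC: "cis \<theta> \<in> C" using that(1) unfolding SI_def circ_set_def Ceq using closure_subset by auto
      have KK: "d/2 \<le> cmod (cis \<theta>' - complex_of_real r * cis \<theta>)" if "cis \<theta>' \<in> K" for \<theta>'
      proof -
        have "d \<le> cmod (cis \<theta>' - cis \<theta>)" using dd[OF that cC] by (simp add: dist_norm)
        also have "\<dots> \<le> 2 * cmod (cis \<theta>' - complex_of_real r * cis \<theta>)"
          by (rule geo_lemma) (use \<open>0 \<le> r\<close> \<open>r \<le> 1\<close> in auto)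
        finally show ?thesis by simp
      qed
      show "AE \<theta>' in lebesgue. hh \<theta>' \<noteq> 0 \<longrightarrow> d/2 \<le> cmod (cis \<theta>' - complex_of_real r * cis \<theta>)"
        using haeK by eventually_elim (use KK in auto)
    qed
    have bnd: "AE \<theta> in lebesgue. norm (s n \<theta>) \<le> Cb * norm (W \<theta>)" for n
    proof (rule AE_I2)
      fix \<theta>
      show "norm (s n \<theta>) \<le> Cb * norm (W \<theta>)"
      proof (cases "\<theta> \<in> SI")
        case True
        have "cmod (herg hh (complex_of_real (rn n) * cis \<theta>)) \<le> Cb"
          by (rule hb[OF True]) (use rn0[of n] in auto)
        then have "cmod (W \<theta>) * cmod (herg hh (complex_of_real (rn n) * cis \<theta>)) \<le> cmod (W \<theta>) * Cb"
          by (rule mult_left_mono) simp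
        then show ?thesis unfolding s_def norm_mult complex_mod_cnj
          by (simp only: mult.commute)
      next
        case False then show ?thesis unfolding s_def W0[OF False] by simp
      qed
    qed
    have wi: "integrable lebesgue (\<lambda>\<theta>. Cb * norm (W \<theta>))" using Wi by auto
    have Li: "integrable lebesgue L"
      by (rule integrable_dominated_convergence[where s=s, OF Lm sm wi _ bnd]) (use lim in simp)
    have conv: "(\<lambda>n. integral\<^sup>L lebesgue (s n)) \<longlonglongrightarrow> integral\<^sup>L lebesgue L"
      by (rule integral_dominated_convergence[where s=s, OF Lm sm wi _ bnd]) (use lim in simp)
    have pos: "0 \<le> Re (integral\<^sup>L lebesgue (s n))" for n
      unfolding s_def W_def SI_def
      by (rule r_level[OF hhi hpos sol fL2 assms(3)[unfolded tmeasurable_def] rn0])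
    have L0: "0 \<le> Re (integral\<^sup>L lebesgue L)"
      using LIMSEQ_le_const[OF tendsto_Re[OF conv]] pos by blast
    have "inner_on I (\<lambda>z. (f z - g0 z) * cnj (g0 z)) (herg hh) = complex_of_real (1/(2*pi)) * integral\<^sup>L lebesgue L"
      unfolding inner_on_def set_lebesgue_integral_def L_def W_def SI_def
      by (intro arg_cong2[where f="(*)"] refl Bochner_Integration.integral_cong) (auto split: split_indicator)
    then show ?thesis using L0 by simp
  qed
  show ?thesis using cont part2 unfolding herg_eq C_def by simp
qed


end
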